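(* Let $\mathcal S$ be a trajectory set satisfying $\bar\sigma(0)\ge0$. If $\bar I(f)=\bar\sigma(f)$ for every $f\in(\mathcal L^1_{(L)})^+$, then the hedging price integral $\int_{(L)}:\mathcal L^1_{(L)}\to\mathbb R$ is strictly positive, i.e. for every $f\in(\mathcal L^1_{(L)})^+$ with $\int_{(L)}f=0$, $f$ is a null function.
   Context: Fix $s_0\in\mathbb R$. A trajectory set is any set $\mathcal S$ of real sequences $S=(S_j)_{j\in\mathbb N_0}$ with $S_0=s_0$. A simple portfolio $(V,n,H)$ consists of $V\in\mathbb R$, $n\in\mathbb N$ and nonanticipating functions $H_i:\mathcal S\to\mathbb R$, $0\le i\le n-1$ (i.e. $H_i(S)=h_i(S_0,\dots,S_i)$ for some arbitrary $h_i:\mathbb R^{i+1}\to\mathbb R$). Its wealth is $\Pi^{V,n,H}_j(S)=V+\sum_{i=0}^{\min\{j,n\}-1}H_i(S)(S_{i+1}-S_i)$ and $\Pi^{V,n,H}_\infty:=\Pi^{V,n,H}_n$; it is positive if $V\ge0$ and $\Pi^{V,n,H}_\infty\ge0$ on $\mathcal S$. A generalized portfolio is a sequence $(V_m,n_m,H_m)_{m\in\mathbb N_0}$ of simple portfolios, positive for every $m\ge1$; it is a positive generalized portfolio if moreover $\Pi^{V_0,n_0,H_0}_j\equiv0$ for all $j$. A map $f:\mathcal S\to[-\infty,+\infty]$ is superhedged with initial endowment $V=\sum_{m=0}^\infty V_m\in(-\infty,+\infty]$ by such a portfolio if $f\le\sum_{m=0}^\infty\Pi^{V_m,n_m,H_m}_\infty$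 on $\mathcal S$. For $f\ge0$, $\bar I(f)$ is the infimum of initial endowments of positive generalized portfolios superhedging $f$; $\bar\sigma(f)$ is the infimum of initial endowments of generalized portfolios superhedging $f$. Let $\mathcal E=\{\Pi^{V,n,H}_\infty\}$ over all simple portfolios. Under $\bar\sigma(0)\ge0$, $I(\Pi^{V,n,H}_\infty):=V$ is a well-defined linear functional on $\mathcal E$. Define $\|f\|:=\bar I(|f|)$; $f$ is a null function if $\|f\|=0$. Let $\mathcal F$ be the space of real-valued $f$ with $\|f\|<\infty$ and $\mathcal E'=\{f\in\mathcal E:\|f\|<\infty\}$. Under $\bar\sigma(0)\ge0$, $I|_{\mathcal E'}$ is $\|\cdot\|$-continuous; $\mathcal L^1_{(L)}$ is the $\|\cdot\|$-closure of $\mathcal E'$ in $\mathcal F$ and $\int_{(L)}$ the unique $\|\cdot\|$-continuous linear extension of $I|_{\mathcal E'}$ to $\mathcal L^1_{(L)}$; it satisfies $\int_{(L)}f=\bar\sigma(f)$ for $f\in\mathcal L^1_{(L)}$. $(\mathcal L^1_{(L)})^+$ denotes the nonnegative elements of $\mathcal L^1_{(L)}$. *)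

theory Defs
  imports "HOL-Analysis.Analysis"
begin

definition trajectory_set :: "real \<Rightarrow> (nat \<Rightarrow> real) set \<Rightarrow> bool" where
  "trajectory_set s0 TS \<longleftrightarrow> (\<forall>S\<in>TS. S 0 = s0)"

text \<open>Nonanticipating strategies: H i is applied to the prefix (S 0, ..., S i),
  so H i S = h i (S 0, ..., S i) with arbitrary h i.\<close>

definition prefix :: "(nat \<Rightarrow> real) \<Rightarrow> nat \<Rightarrow> real list" where
  "prefix S i = map S [0..<Suc i]"

definition wealth ::
  "real \<Rightarrow> nat \<Rightarrow> (nat \<Rightarrow> real list \<Rightarrow> real) \<Rightarrow> nat \<Rightarrow> (nat \<Rightarrow> real) \<Rightarrow> real" where
  "wealth V n H j S = V + (\<Sum>i<min j n. H i (prefix S i) * (S (Suc i) - S i))"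

definition wealth_inf ::
  "real \<Rightarrow> nat \<Rightarrow> (nat \<Rightarrow> real list \<Rightarrow> real) \<Rightarrow> (nat \<Rightarrow> real) \<Rightarrow> real" where
  "wealth_inf V n H S = wealth V n H n S"

definition positive_portfolio ::
  "(nat \<Rightarrow> real) set \<Rightarrow> real \<Rightarrow> nat \<Rightarrow> (nat \<Rightarrow> real list \<Rightarrow> real) \<Rightarrow> bool" where
  "positive_portfolio TS V n H \<longleftrightarrow> 1 \<le> n \<and> 0 \<le> V \<and> (\<forall>S\<in>TS. 0 \<le> wealth_inf V n H S)"

definition gen_portfolio ::
  "(nat \<Rightarrow> real) set \<Rightarrow> (nat \<Rightarrow> real) \<Rightarrow> (nat \<Rightarrow> nat) \<Rightarrow> (nat \<Rightarrow> nat \<Rightarrow> real list \<Rightarrow> real) \<Rightarrow> bool" where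
  "gen_portfolio TS Vs ns Hs \<longleftrightarrow>
     1 \<le> ns 0 \<and> (\<forall>m\<ge>1. positive_portfolio TS (Vs m) (ns m) (Hs m))"

definition pos_gen_portfolio ::
  "(nat \<Rightarrow> real) set \<Rightarrow> (nat \<Rightarrow> real) \<Rightarrow> (nat \<Rightarrow> nat) \<Rightarrow> (nat \<Rightarrow> nat \<Rightarrow> real list \<Rightarrow> real) \<Rightarrow> bool" where
  "pos_gen_portfolio TS Vs ns Hs \<longleftrightarrow>
     gen_portfolio TS Vs ns Hs \<and> (\<forall>j. \<forall>S\<in>TS. wealth (Vs 0) (ns 0) (Hs 0) j S = 0)"

text \<open>Initial endowment \<open>\<Sum>m V_m \<in> (-\<infinity>,+\<infinity>]\<close> (terms with m \<ge> 1 are nonnegative).\<close>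

definition endowment :: "(nat \<Rightarrow> real) \<Rightarrow> ereal" where
  "endowment Vs = ereal (Vs 0) + (\<Sum>m. ereal (Vs (Suc m)))"

definition superhedges ::
  "(nat \<Rightarrow> real) set \<Rightarrow> ((nat \<Rightarrow> real) \<Rightarrow> ereal) \<Rightarrow>
   (nat \<Rightarrow> real) \<Rightarrow> (nat \<Rightarrow> nat) \<Rightarrow> (nat \<Rightarrow> nat \<Rightarrow> real list \<Rightarrow> real) \<Rightarrow> bool" where
  "superhedges TS f Vs ns Hs \<longleftrightarrow>
     (\<forall>S\<in>TS. f S \<le> ereal (wealth_inf (Vs 0) (ns 0) (Hs 0) S)
                   + (\<Sum>m. ereal (wealth_inf (Vs (Suc m)) (ns (Suc m)) (Hs (Suc m)) S)))"

definition upper_I :: "(nat \<Rightarrow> real) set \<Rightarrow> ((nat \<Rightarrow> real) \<Rightarrow> ereal) \<Rightarrow> ereal" where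
  "upper_I TS f = Inf {endowment Vs | Vs ns Hs.
      pos_gen_portfolio TS Vs ns Hs \<and> superhedges TS f Vs ns Hs}"

definition upper_sigma :: "(nat \<Rightarrow> real) set \<Rightarrow> ((nat \<Rightarrow> real) \<Rightarrow> ereal) \<Rightarrow> ereal" where
  "upper_sigma TS f = Inf {endowment Vs | Vs ns Hs.
      gen_portfolio TS Vs ns Hs \<and> superhedges TS f Vs ns Hs}"

definition snorm :: "(nat \<Rightarrow> real) set \<Rightarrow> ((nat \<Rightarrow> real) \<Rightarrow> real) \<Rightarrow> ereal" where
  "snorm TS f = upper_I TS (\<lambda>S. ereal \<bar>f S\<bar>)"

definition null_function :: "(nat \<Rightarrow> real) set \<Rightarrow> ((nat \<Rightarrow> real) \<Rightarrow> real) \<Rightarrow> bool" where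
  "null_function TS f \<longleftrightarrow> snorm TS f = 0"

definition F_space :: "(nat \<Rightarrow> real) set \<Rightarrow> ((nat \<Rightarrow> real) \<Rightarrow> real) set" where
  "F_space TS = {f. snorm TS f < \<infinity>}"

definition E_space :: "(nat \<Rightarrow> real) set \<Rightarrow> ((nat \<Rightarrow> real) \<Rightarrow> real) set" where
  "E_space TS = {g. \<exists>V n H. 1 \<le> n \<and> (\<forall>S\<in>TS. g S = wealth_inf V n H S)}"

definition E'_space :: "(nat \<Rightarrow> real) set \<Rightarrow> ((nat \<Rightarrow> real) \<Rightarrow> real) set" where
  "E'_space TS = E_space TS \<inter> F_space TS"

definition elem_I :: "(nat \<Rightarrow> real) set \<Rightarrow> ((nat \<Rightarrow> real) \<Rightarrow> real) \<Rightarrow> real" where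
  "elem_I TS g = (THE V. \<exists>n H. 1 \<le> n \<and> (\<forall>S\<in>TS. g S = wealth_inf V n H S))"

definition L1_space :: "(nat \<Rightarrow> real) set \<Rightarrow> ((nat \<Rightarrow> real) \<Rightarrow> real) set" where
  "L1_space TS = {f \<in> F_space TS. \<forall>\<epsilon>>0. \<exists>g\<in>E'_space TS. snorm TS (\<lambda>S. f S - g S) < ereal \<epsilon>}"

definition L1_pos :: "(nat \<Rightarrow> real) set \<Rightarrow> ((nat \<Rightarrow> real) \<Rightarrow> real) set" where
  "L1_pos TS = {f \<in> L1_space TS. \<forall>S\<in>TS. 0 \<le> f S}"

text \<open>The hedging price integral: the value of the seminorm-continuous extension of
  elem_I from E' to L^1_(L), i.e. the limit of elem_I g as g \<rightarrow> f in E'.\<close>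

definition hedging_integral :: "(nat \<Rightarrow> real) set \<Rightarrow> ((nat \<Rightarrow> real) \<Rightarrow> real) \<Rightarrow> real" where
  "hedging_integral TS f = (THE c. \<forall>\<epsilon>>0. \<exists>\<delta>>0. \<forall>g\<in>E'_space TS.
      snorm TS (\<lambda>S. f S - g S) < ereal \<delta> \<longrightarrow> \<bar>elem_I TS g - c\<bar> < \<epsilon>)"

end

theory Submission
  imports Defs
begin

definition combH :: "real \<Rightarrow> nat \<Rightarrow> (nat \<Rightarrow> real list \<Rightarrow> real) \<Rightarrow> real \<Rightarrow> nat \<Rightarrow> (nat \<Rightarrow> real list \<Rightarrow> real) \<Rightarrow> nat \<Rightarrow> real list \<Rightarrow> real" where
  "combH a n1 H1 b n2 H2 = (\<lambda>i x. a * (if i < n1 then H1 i x else 0) + b * (if i < n2 then H2 i x else 0))"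

lemma sum_trunc:
  "(\<Sum>i<min j (max n1 n2). (if i < n1 then h i else 0)) = (\<Sum>i<min j (n1::nat). (h i :: real))"
  by (rule sum.mono_neutral_cong_right) auto

lemma wealth_comb:
  "wealth (a*V1 + b*V2) (max n1 n2) (combH a n1 H1 b n2 H2) j S = a * wealth V1 n1 H1 j S + b * wealth V2 n2 H2 j S"
proof -
  let ?d = "\<lambda>i. S (Suc i) - S i"
  have "(\<Sum>i<min j (max n1 n2). combH a n1 H1 b n2 H2 i (prefix S i) * ?d i)
      = (\<Sum>i<min j (max n1 n2). a * (if i < n1 then H1 i (prefix S i) * ?d i else 0)
         + b * (if i < n2 then H2 i (prefix S i) * ?d i else 0))"
    by (rule sum.cong) (auto simp: combH_def algebra_simps)
  also have "\<dots> = a * (\<Sum>i<min j (max n1 n2). (if i < n1 then H1 i (prefix S i) * ?d i else 0))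
      + b * (\<Sum>i<min j (max n2 n1). (if i < n2 then H2 i (prefix S i) * ?d i else 0))"
    by (simp add: sum.distrib sum_distrib_left max.commute)
  finally show ?thesis unfolding wealth_def sum_trunc by (simp add: algebra_simps)
qed

lemma wealth_ge: "n \<le> j \<Longrightarrow> wealth V n H j S = wealth_inf V n H S"
  by (simp add: wealth_def wealth_inf_def min_def)

lemma wealth_inf_comb:
  "wealth_inf (a*V1 + b*V2) (max n1 n2) (combH a n1 H1 b n2 H2) S = a * wealth_inf V1 n1 H1 S + b * wealth_inf V2 n2 H2 S"
  by (simp add: wealth_inf_def[of _ "max n1 n2"] wealth_comb wealth_ge)

lemma TS_ne:
  assumes "upper_sigma TS (\<lambda>S. 0) \<ge> 0" shows "TS \<noteq> {}"
proof
  assume e: "TS = {}"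
  let ?Vs = "(\<lambda>m. if m = 0 then -1 else 0) :: nat \<Rightarrow> real"
  have "gen_portfolio TS ?Vs (\<lambda>_. 1) (\<lambda>_ _ _. 0)"
    using e by (simp add: gen_portfolio_def positive_portfolio_def)
  moreover have "superhedges TS (\<lambda>S. 0) ?Vs (\<lambda>_. 1) (\<lambda>_ _ _. 0)"
    using e by (simp add: superhedges_def)
  ultimately have "upper_sigma TS (\<lambda>S. 0) \<le> endowment ?Vs"
    unfolding upper_sigma_def by (intro Inf_lower) blast
  also have "endowment ?Vs = ereal (-1)" by (simp add: endowment_def zero_ereal_def[symmetric])
  finally have "upper_sigma TS (\<lambda>S. 0) \<le> ereal (-1)" .
  from order_trans[OF assms this] show False by simp
qed

lemma pos_V0: "pos_gen_portfolio TS Vs ns Hs \<Longrightarrow> S \<in> TS \<Longrightarrow> Vs 0 = 0"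
proof -
  assume "pos_gen_portfolio TS Vs ns Hs" "S \<in> TS"
  then have "wealth (Vs 0) (ns 0) (Hs 0) 0 S = 0" unfolding pos_gen_portfolio_def by blast
  then show ?thesis by (simp add: wealth_def)
qed

lemma pos_W0: "pos_gen_portfolio TS Vs ns Hs \<Longrightarrow> S \<in> TS \<Longrightarrow> wealth_inf (Vs 0) (ns 0) (Hs 0) S = 0"
  unfolding pos_gen_portfolio_def wealth_inf_def by blast

lemma gen_nonneg:
  assumes "gen_portfolio TS Vs ns Hs" "S \<in> TS"
  shows "0 \<le> wealth_inf (Vs (Suc m)) (ns (Suc m)) (Hs (Suc m)) S" "0 \<le> Vs (Suc m)"
  using assms unfolding gen_portfolio_def positive_portfolio_def by auto

lemma gen_nonneg_V:
  assumes "gen_portfolio TS Vs ns Hs"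
  shows "0 \<le> Vs (Suc m)"
  using assms unfolding gen_portfolio_def positive_portfolio_def by auto

lemma upperU:
  assumes n: "1 \<le> n" and g: "\<forall>S\<in>TS. g S = wealth_inf V n H S"
    and Q: "pos_gen_portfolio TS Vs ns Hs" and sh: "superhedges TS (\<lambda>S. ereal \<bar>f S - g S\<bar>) Vs ns Hs"
    and ne: "TS \<noteq> {}"
  shows "upper_sigma TS (\<lambda>S. ereal (f S)) \<le> ereal V + endowment Vs"
proof -
  have gen: "gen_portfolio TS (Vs(0:=V)) (ns(0:=n)) (Hs(0:=H))"
    using Q n unfolding pos_gen_portfolio_def gen_portfolio_def by auto
  have sh2: "superhedges TS (\<lambda>S. ereal (f S)) (Vs(0:=V)) (ns(0:=n)) (Hs(0:=H))"
    unfolding superhedges_def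
  proof
    fix S assume S: "S \<in> TS"
    define X where "X = (\<Sum>m. ereal (wealth_inf (Vs (Suc m)) (ns (Suc m)) (Hs (Suc m)) S))"
    have X0: "0 \<le> X" unfolding X_def
      by (rule suminf_0_le) (use gen_nonneg[OF conjunct1[OF Q[unfolded pos_gen_portfolio_def]] S] in simp)
    have "ereal \<bar>f S - g S\<bar> \<le> ereal (wealth_inf (Vs 0) (ns 0) (Hs 0) S) + X"
      using sh S unfolding superhedges_def X_def by blast
    then have "ereal \<bar>f S - g S\<bar> \<le> ereal 0 + X" using pos_W0[OF Q S] by simp
    then have h: "ereal \<bar>f S - g S\<bar> \<le> X" by simp
    have "ereal (f S) \<le> ereal (wealth_inf V n H S) + X"
    proof (cases X)
      case (real r)
      have "\<bar>f S - g S\<bar> \<le> r" using h real by simp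
      then show ?thesis using g S real by simp
    next
      case PInf then show ?thesis by simp
    next
      case MInf then show ?thesis using X0 by simp
    qed
    then show "ereal (f S) \<le> ereal (wealth_inf ((Vs(0:=V)) 0) ((ns(0:=n)) 0) ((Hs(0:=H)) 0) S) +
             (\<Sum>m. ereal (wealth_inf ((Vs(0:=V)) (Suc m)) ((ns(0:=n)) (Suc m)) ((Hs(0:=H)) (Suc m)) S))"
      by (simp add: X_def)
  qed
  have "upper_sigma TS (\<lambda>S. ereal (f S)) \<le> endowment (Vs(0:=V))"
    unfolding upper_sigma_def using gen sh2 by (intro Inf_lower) blast
  also have "endowment (Vs(0:=V)) = ereal V + endowment Vs"
    using pos_V0[OF Q] ne by (auto simp: endowment_def)
  finally show ?thesis .
qed

lemma suminf_ereal_add: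
  assumes "\<And>m. 0 \<le> x m" "\<And>m. 0 \<le> y m"
  shows "(\<Sum>m. ereal (x m + y m)) = (\<Sum>m. ereal (x m)) + (\<Sum>m. ereal (y m))"
  using suminf_add_ereal[of "\<lambda>m. ereal (x m)" "\<lambda>m. ereal (y m)"] assms by simp

lemma lowerL:
  assumes s0: "upper_sigma TS (\<lambda>S. 0) \<ge> 0" and ne: "TS \<noteq> {}"
    and n: "1 \<le> n" and g: "\<forall>S\<in>TS. g S = wealth_inf V n H S"
    and P: "gen_portfolio TS VsP nsP HsP" and shP: "superhedges TS (\<lambda>S. ereal (f S)) VsP nsP HsP"
    and Q: "pos_gen_portfolio TS VsQ nsQ HsQ" and shQ: "superhedges TS (\<lambda>S. ereal \<bar>f S - g S\<bar>) VsQ nsQ HsQ"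
  shows "ereal V \<le> endowment VsP + endowment VsQ"
proof -
  have Qg: "gen_portfolio TS VsQ nsQ HsQ" using Q unfolding pos_gen_portfolio_def by blast
  define VsR where "VsR m = (if m = 0 then 1*(1*VsP 0 + 1*VsQ 0) + (-1)*V else 1*VsP m + 1*VsQ m)" for m
  define nsR where "nsR m = (if m = 0 then max (max (nsP 0) (nsQ 0)) n else max (nsP m) (nsQ m))" for m
  define HsR where "HsR m = (if m = 0 then combH 1 (max (nsP 0) (nsQ 0)) (combH 1 (nsP 0) (HsP 0) 1 (nsQ 0) (HsQ 0)) (-1) n H
     else combH 1 (nsP m) (HsP m) 1 (nsQ m) (HsQ m))" for m
  have w0: "wealth_inf (VsR 0) (nsR 0) (HsR 0) S = 1*(1*wealth_inf (VsP 0) (nsP 0) (HsP 0) S + 1*wealth_inf (VsQ 0) (nsQ 0) (HsQ 0) S) + (-1) * wealth_inf V n H S" for S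
    unfolding VsR_def nsR_def HsR_def
    using wealth_inf_comb[of 1 "1*VsP 0 + 1*VsQ 0" "-1" V "max (nsP 0) (nsQ 0)" n "combH 1 (nsP 0) (HsP 0) 1 (nsQ 0) (HsQ 0)" H S]
      wealth_inf_comb[of 1 "VsP 0" 1 "VsQ 0" "nsP 0" "nsQ 0" "HsP 0" "HsQ 0" S]
    by simp
  have wS: "wealth_inf (VsR m) (nsR m) (HsR m) S = 1*wealth_inf (VsP m) (nsP m) (HsP m) S + 1*wealth_inf (VsQ m) (nsQ m) (HsQ m) S" if "m \<noteq> 0" for m S
    unfolding VsR_def nsR_def HsR_def
    using that wealth_inf_comb[of 1 "VsP m" 1 "VsQ m" "nsP m" "nsQ m" "HsP m" "HsQ m" S]
    by simp
  have genR: "gen_portfolio TS VsR nsR HsR"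
    unfolding gen_portfolio_def
  proof (intro conjI allI impI)
    show "1 \<le> nsR 0" using n by (simp add: nsR_def)
    fix m :: nat assume m: "1 \<le> m"
    have pp: "positive_portfolio TS (VsP m) (nsP m) (HsP m)" "positive_portfolio TS (VsQ m) (nsQ m) (HsQ m)"
      using P Qg m unfolding gen_portfolio_def by auto
    show "positive_portfolio TS (VsR m) (nsR m) (HsR m)"
      using pp m wS[of m] unfolding positive_portfolio_def by (auto simp: VsR_def nsR_def)
  qed
  have shR: "superhedges TS (\<lambda>S. 0) VsR nsR HsR"
    unfolding superhedges_def
  proof
    fix S assume S: "S \<in> TS"
    define XP where "XP = (\<Sum>m. ereal (wealth_inf (VsP (Suc m)) (nsP (Suc m)) (HsP (Suc m)) S))"
    define XQ where "XQ = (\<Sum>m. ereal (wealth_inf (VsQ (Suc m)) (nsQ (Suc m)) (HsQ (Suc m)) S))"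
    have XP0: "0 \<le> XP" unfolding XP_def
      by (rule suminf_0_le) (use gen_nonneg[OF P S] in simp)
    have XQ0: "0 \<le> XQ" unfolding XQ_def
      by (rule suminf_0_le) (use gen_nonneg[OF Qg S] in simp)
    have sumR: "(\<Sum>m. ereal (wealth_inf (VsR (Suc m)) (nsR (Suc m)) (HsR (Suc m)) S)) = XP + XQ"
      unfolding XP_def XQ_def using wS
      by (simp add: suminf_ereal_add gen_nonneg[OF P S] gen_nonneg[OF Qg S])
    have hP: "ereal (f S) \<le> ereal (wealth_inf (VsP 0) (nsP 0) (HsP 0) S) + XP"
      using shP S unfolding superhedges_def XP_def by blast
    have "ereal \<bar>f S - g S\<bar> \<le> ereal (wealth_inf (VsQ 0) (nsQ 0) (HsQ 0) S) + XQ"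
      using shQ S unfolding superhedges_def XQ_def by blast
    then have hQ: "ereal \<bar>f S - g S\<bar> \<le> XQ" using pos_W0[OF Q S] by simp
    have "0 \<le> ereal (wealth_inf (VsP 0) (nsP 0) (HsP 0) S + wealth_inf (VsQ 0) (nsQ 0) (HsQ 0) S - g S) + (XP + XQ)"
    proof (cases XP)
      case (real p)
      show ?thesis
      proof (cases XQ)
        case (real q)
        have "f S \<le> wealth_inf (VsP 0) (nsP 0) (HsP 0) S + p" using hP \<open>XP = ereal p\<close> by simp
        moreover have "\<bar>f S - g S\<bar> \<le> q" using hQ real by simp
        ultimately show ?thesis using real \<open>XP = ereal p\<close> pos_W0[OF Q S] by simp
      qed (use XQ0 real in auto)
    qed (use XP0 XQ0 in auto)
    then show "0 \<le> ereal (wealth_inf (VsR 0) (nsR 0) (HsR 0) S) + (\<Sum>m. ereal (wealth_inf (VsR (Suc m)) (nsR (Suc m)) (HsR (Suc m)) S))"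
      using w0[of S] g S sumR by simp
  qed
  have "upper_sigma TS (\<lambda>S. 0) \<le> endowment VsR"
    unfolding upper_sigma_def using genR shR by (intro Inf_lower) blast
  with s0 have e0: "0 \<le> endowment VsR" by simp
  obtain S0 where S0: "S0 \<in> TS" using ne by blast
  define YP where "YP = (\<Sum>m. ereal (VsP (Suc m)))"
  define YQ where "YQ = (\<Sum>m. ereal (VsQ (Suc m)))"
  have YP0: "0 \<le> YP" unfolding YP_def by (rule suminf_0_le) (use gen_nonneg_V[OF P] in simp)
  have YQ0: "0 \<le> YQ" unfolding YQ_def by (rule suminf_0_le) (use gen_nonneg_V[OF Qg] in simp)
  have eR: "endowment VsR = ereal (VsP 0 - V) + (YP + YQ)"
    unfolding endowment_def YP_def YQ_def using pos_V0[OF Q S0]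
    by (simp add: VsR_def suminf_ereal_add gen_nonneg_V[OF P] gen_nonneg_V[OF Qg])
  have eP: "endowment VsP = ereal (VsP 0) + YP" unfolding endowment_def YP_def ..
  have eQ: "endowment VsQ = YQ" unfolding endowment_def YQ_def using pos_V0[OF Q S0] by simp
  show ?thesis
  proof (cases YP)
    case (real p)
    show ?thesis
    proof (cases YQ)
      case (real q)
      then show ?thesis using e0 eR eP eQ \<open>YP = ereal p\<close> by simp
    qed (use YQ0 eP eQ real in auto)
  qed (use YP0 eP eQ YQ0 in auto)
qed

lemma l1: fixes b y :: ereal assumes "y \<le> ereal x + b" shows "y - ereal x \<le> b"
  using assms by (cases b; cases y) auto
lemma l2: fixes b y :: ereal assumes "y - ereal x \<le> b" shows "y \<le> ereal x + b"
  using assms by (cases b; cases y) auto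
lemma l3: fixes a b :: ereal assumes "ereal x \<le> a + b" "0 \<le> b" shows "ereal x - b \<le> a"
  using assms by (cases a; cases b) auto
lemma l4: fixes a b :: ereal assumes "ereal x - b \<le> a" "0 \<le> b" shows "ereal x - a \<le> b"
  using assms by (cases a; cases b) auto
lemma l5: fixes a :: ereal assumes "ereal x - a \<le> ereal d" shows "ereal x \<le> a + ereal d"
  using assms by (cases a) auto

lemma infU: fixes B :: "ereal set" assumes "\<forall>b\<in>B. y \<le> ereal x + b" shows "y \<le> ereal x + Inf B"
  by (rule l2, rule Inf_greatest) (use assms l1 in blast)

lemma infL: fixes A B :: "ereal set"
  assumes "\<forall>a\<in>A. \<forall>b\<in>B. ereal x \<le> a + b" "\<forall>b\<in>B. 0 \<le> b" "Inf B = ereal d"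
  shows "ereal x \<le> Inf A + ereal d"
proof -
  have "\<forall>b\<in>B. ereal x - b \<le> Inf A" using assms(1,2) by (auto intro!: Inf_greatest l3)
  then have "\<forall>b\<in>B. ereal x - Inf A \<le> b" using assms(2) l4 by blast
  then have "ereal x - Inf A \<le> Inf B" by (intro Inf_greatest) blast
  then show ?thesis using assms(3) l5 by simp
qed

lemma endow_pos_nonneg:
  assumes "pos_gen_portfolio TS Vs ns Hs" "TS \<noteq> {}"
  shows "0 \<le> endowment Vs"
proof -
  obtain S where S: "S \<in> TS" using assms(2) by blast
  have g: "gen_portfolio TS Vs ns Hs" using assms(1) unfolding pos_gen_portfolio_def by blast
  have "0 \<le> (\<Sum>m. ereal (Vs (Suc m)))" by (rule suminf_0_le) (use gen_nonneg_V[OF g] in simp)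
  then show ?thesis unfolding endowment_def using pos_V0[OF assms(1) S] by simp
qed

lemma snorm_nonneg: "TS \<noteq> {} \<Longrightarrow> 0 \<le> snorm TS h"
  unfolding snorm_def upper_I_def by (auto intro!: Inf_greatest endow_pos_nonneg)

lemma Ubound:
  assumes ne: "TS \<noteq> {}" and n: "1 \<le> n" and g: "\<forall>S\<in>TS. g S = wealth_inf V n H S"
  shows "upper_sigma TS (\<lambda>S. ereal (f S)) \<le> ereal V + snorm TS (\<lambda>S. f S - g S)"
  unfolding snorm_def upper_I_def
  by (rule infU) (use upperU[OF n g _ _ ne] in auto)

lemma Lbound:
  assumes s0: "upper_sigma TS (\<lambda>S. 0) \<ge> 0" and ne: "TS \<noteq> {}"
    and n: "1 \<le> n" and g: "\<forall>S\<in>TS. g S = wealth_inf V n H S"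
    and d: "snorm TS (\<lambda>S. f S - g S) = ereal d"
  shows "ereal V \<le> upper_sigma TS (\<lambda>S. ereal (f S)) + ereal d"
  unfolding upper_sigma_def
  apply (rule infL)
  using lowerL[OF s0 ne n g] endow_pos_nonneg[OF _ ne] d unfolding snorm_def upper_I_def by auto

lemma one_gen:
  assumes "1 \<le> n"
  shows "gen_portfolio TS (\<lambda>m. if m=0 then V else 0) (\<lambda>m. if m=0 then n else 1) (\<lambda>m. if m=0 then H else (\<lambda>_ _. 0))"
    "superhedges TS (\<lambda>S. ereal (wealth_inf V n H S)) (\<lambda>m. if m=0 then V else 0) (\<lambda>m. if m=0 then n else 1) (\<lambda>m. if m=0 then H else (\<lambda>_ _. 0))"
    "endowment (\<lambda>m. if m=0 then V else 0) = ereal V"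
  using assms
  by (auto simp: gen_portfolio_def positive_portfolio_def superhedges_def wealth_inf_def wealth_def endowment_def zero_ereal_def[symmetric])

lemma zero_pos:
  "pos_gen_portfolio TS (\<lambda>_. 0) (\<lambda>_. 1) (\<lambda>_ _ _. 0)"
  "superhedges TS (\<lambda>S. ereal \<bar>g S - g S\<bar>) (\<lambda>_. 0) (\<lambda>_. 1) (\<lambda>_ _ _. 0)"
  "endowment (\<lambda>_. 0) = 0"
  by (auto simp: pos_gen_portfolio_def gen_portfolio_def positive_portfolio_def superhedges_def wealth_inf_def wealth_def endowment_def zero_ereal_def[symmetric])

lemma elemI:
  assumes s0: "upper_sigma TS (\<lambda>S. 0) \<ge> 0" and ne: "TS \<noteq> {}"
    and n: "1 \<le> n" and g: "\<forall>S\<in>TS. g S = wealth_inf V n H S"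
  shows "elem_I TS g = V"
  unfolding elem_I_def
proof (rule the_equality)
  show "\<exists>n H. 1 \<le> n \<and> (\<forall>S\<in>TS. g S = wealth_inf V n H S)" using n g by blast
  fix V' assume "\<exists>n H. 1 \<le> n \<and> (\<forall>S\<in>TS. g S = wealth_inf V' n H S)"
  then obtain n' H' where n': "1 \<le> n'" and g': "\<forall>S\<in>TS. g S = wealth_inf V' n' H' S" by blast
  have sh1: "superhedges TS (\<lambda>S. ereal (g S)) (\<lambda>m. if m=0 then V' else 0) (\<lambda>m. if m=0 then n' else 1) (\<lambda>m. if m=0 then H' else (\<lambda>_ _. 0))"
    using one_gen(2)[OF n', where TS=TS and H=H' and V=V'] g' unfolding superhedges_def by auto
  have "ereal V \<le> ereal V' + 0"
    using lowerL[OF s0 ne n g one_gen(1)[OF n'] sh1 zero_pos(1) zero_pos(2)] one_gen(3)[OF n'] zero_pos(3) by simp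
  moreover
  have sh2: "superhedges TS (\<lambda>S. ereal (g S)) (\<lambda>m. if m=0 then V else 0) (\<lambda>m. if m=0 then n else 1) (\<lambda>m. if m=0 then H else (\<lambda>_ _. 0))"
    using one_gen(2)[OF n, where TS=TS and H=H and V=V] g unfolding superhedges_def by auto
  have "ereal V' \<le> ereal V + 0"
    using lowerL[OF s0 ne n' g' one_gen(1)[OF n] sh2 zero_pos(1) zero_pos(2)] one_gen(3)[OF n] zero_pos(3) by simp
  ultimately show "V' = V" by simp
qed

lemma upper_I_cong:
  assumes "\<forall>S\<in>TS. F S = G S" shows "upper_I TS F = upper_I TS G"
proof -
  have "superhedges TS F = superhedges TS G" using assms unfolding superhedges_def by (auto simp: fun_eq_iff)
  then show ?thesis unfolding upper_I_def by simp
qed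

theorem proposition3p9:
  fixes s0 :: real and TS :: "(nat \<Rightarrow> real) set"
  assumes "trajectory_set s0 TS"
    and "upper_sigma TS (\<lambda>S. 0) \<ge> 0"
    and "\<forall>f\<in>L1_pos TS. upper_I TS (\<lambda>S. ereal (f S)) = upper_sigma TS (\<lambda>S. ereal (f S))"
  shows "\<forall>f\<in>L1_pos TS. hedging_integral TS f = 0 \<longrightarrow> null_function TS f"
proof (intro ballI impI)
  fix f assume fL: "f \<in> L1_pos TS" and hi: "hedging_integral TS f = 0"
  note s0 = assms(2)
  have ne: "TS \<noteq> {}" using TS_ne[OF s0] .
  have fpos: "\<forall>S\<in>TS. 0 \<le> f S" and fL1: "f \<in> L1_space TS" using fL unfolding L1_pos_def by auto
  have dense: "\<exists>g\<in>E'_space TS. snorm TS (\<lambda>S. f S - g S) < ereal e" if "e > 0" for e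
    using fL1 that unfolding L1_space_def by blast
  define \<sigma> where "\<sigma> = upper_sigma TS (\<lambda>S. ereal (f S))"
  have key: "\<bar>elem_I TS g - real_of_ereal \<sigma>\<bar> \<le> d \<and> \<bar>\<sigma>\<bar> \<noteq> \<infinity>"
    if gE: "g \<in> E_space TS" and d: "snorm TS (\<lambda>S. f S - g S) = ereal d" for g d
  proof -
    obtain V n H where n: "1 \<le> n" and g: "\<forall>S\<in>TS. g S = wealth_inf V n H S"
      using gE unfolding E_space_def by blast
    have eI: "elem_I TS g = V" using elemI[OF s0 ne n g] .
    have u: "\<sigma> \<le> ereal V + ereal d" using Ubound[OF ne n g, of f] d unfolding \<sigma>_def by simp
    have l: "ereal V \<le> \<sigma> + ereal d" using Lbound[OF s0 ne n g d] unfolding \<sigma>_def .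
    show ?thesis using u l eI by (cases \<sigma>) auto
  qed
  have dfin: "\<exists>d. snorm TS (\<lambda>S. f S - g S) = ereal d \<and> d < e" if "snorm TS (\<lambda>S. f S - g S) < ereal e" for g e
  proof -
    have "0 \<le> snorm TS (\<lambda>S. f S - g S)" using snorm_nonneg[OF ne] .
    then show ?thesis using that by (cases "snorm TS (\<lambda>S. f S - g S)") auto
  qed
  obtain g1 where g1: "g1 \<in> E'_space TS" "snorm TS (\<lambda>S. f S - g1 S) < ereal 1" using dense[of 1] by auto
  obtain d1 where d1: "snorm TS (\<lambda>S. f S - g1 S) = ereal d1" using dfin[OF g1(2)] by blast
  have "g1 \<in> E_space TS" using g1(1) unfolding E'_space_def by blast
  note k1 = key[OF this d1]
  have \<sigma>fin: "\<bar>\<sigma>\<bar> \<noteq> \<infinity>" using conjunct2[OF k1] .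
  define c0 where "c0 = real_of_ereal \<sigma>"
  let ?P = "\<lambda>c. \<forall>\<epsilon>>0. \<exists>\<delta>>0. \<forall>g\<in>E'_space TS.
      snorm TS (\<lambda>S. f S - g S) < ereal \<delta> \<longrightarrow> \<bar>elem_I TS g - c\<bar> < \<epsilon>"
  have Pc0: "?P c0"
  proof (intro allI impI)
    fix e :: real assume e: "e > 0"
    show "\<exists>\<delta>>0. \<forall>g\<in>E'_space TS. snorm TS (\<lambda>S. f S - g S) < ereal \<delta> \<longrightarrow> \<bar>elem_I TS g - c0\<bar> < e"
    proof (intro exI conjI ballI impI)
      show "e > 0" by fact
      fix g assume gE: "g \<in> E'_space TS" and lt: "snorm TS (\<lambda>S. f S - g S) < ereal e"
      obtain d where d: "snorm TS (\<lambda>S. f S - g S) = ereal d" "d < e" using dfin[OF lt] by blast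
      show "\<bar>elem_I TS g - c0\<bar> < e" using key[of g d] gE d unfolding E'_space_def c0_def by auto
    qed
  qed
  have uniq: "c = c0" if Pc: "?P c" for c
  proof (rule ccontr)
    assume ne0: "c \<noteq> c0"
    define e where "e = \<bar>c - c0\<bar> / 2"
    have e: "e > 0" using ne0 unfolding e_def by simp
    obtain \<delta> where \<delta>: "\<delta> > 0" and P\<delta>: "\<forall>g\<in>E'_space TS. snorm TS (\<lambda>S. f S - g S) < ereal \<delta> \<longrightarrow> \<bar>elem_I TS g - c\<bar> < e"
      using Pc e by blast
    obtain g where gE: "g \<in> E'_space TS" and lt: "snorm TS (\<lambda>S. f S - g S) < ereal (min \<delta> e)"
      using dense[of "min \<delta> e"] \<delta> e by auto
    obtain d where d: "snorm TS (\<lambda>S. f S - g S) = ereal d" "d < min \<delta> e" using dfin[OF lt] by blast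
    have 1: "\<bar>elem_I TS g - c\<bar> < e" using P\<delta> gE d by simp
    have 2: "\<bar>elem_I TS g - c0\<bar> \<le> d" using key[of g d] gE d unfolding E'_space_def c0_def by auto
    have 3: "d < \<bar>c - c0\<bar> / 2" using d(2) unfolding e_def by simp
    have "\<bar>c - c0\<bar> \<le> \<bar>elem_I TS g - c\<bar> + \<bar>elem_I TS g - c0\<bar>" by linarith
    then show False using 1 2 3 unfolding e_def by argo
  qed
  have "hedging_integral TS f = c0"
    unfolding hedging_integral_def using Pc0 uniq by (rule the_equality)
  with hi have "c0 = 0" by simp
  then have \<sigma>0: "\<sigma> = 0" using \<sigma>fin unfolding c0_def by (cases \<sigma>) (auto simp: zero_ereal_def)
  have "snorm TS f = upper_I TS (\<lambda>S. ereal (f S))"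
    unfolding snorm_def using fpos by (intro upper_I_cong) auto
  also have "\<dots> = 0" using assms(3) fL \<sigma>0 unfolding \<sigma>_def by simp
  finally show "null_function TS f" unfolding null_function_def .
qed

end
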